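(* For every integer $k\ge1$, $N(2k+3,k)=3$ if $3\mid k$ and $N(2k+3,k)=1$ if $3\nmid k$.
   Context: For $n>k\ge1$, $N(n,k)$ is the nullity of the $n\times n$ skew-symmetric Toeplitz matrix $A(n,k)$ whose first $k$ superdiagonals have all entries $1$ and whose remaining superdiagonals have all entries $0$. *)

theory Defs
  imports "Jordan_Normal_Form.Matrix_Kernel"
begin

definition A_mat :: "nat \<Rightarrow> nat \<Rightarrow> real mat" where
  "A_mat n k = mat n n (\<lambda>(i, j).
     if i < j \<and> j - i \<le> k then 1
     else if j < i \<and> i - j \<le> k then -1
     else 0)"

definition N :: "nat \<Rightarrow> nat \<Rightarrow> nat" where
  "N n k = kernel_dim (A_mat n k)"

end

theory Submission
  imports Defs
begin

definition cf :: "nat \<Rightarrow> nat \<Rightarrow> nat \<Rightarrow> real" where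
  "cf k i j = (if i < j \<and> j - i \<le> k then 1 else if j < i \<and> i - j \<le> k then -1 else 0)"

definition rw :: "nat \<Rightarrow> nat \<Rightarrow> (nat \<Rightarrow> real) \<Rightarrow> nat \<Rightarrow> real" where
  "rw n k x i = (\<Sum>j<n. cf k i j * x j)"

definition Dd :: "nat \<Rightarrow> nat \<Rightarrow> (nat \<Rightarrow> real) \<Rightarrow> nat \<Rightarrow> real" where
  "Dd n k x i = (if i+k+1<n then x(i+k+1) else 0) - x(i+1) - x i + (if k \<le> i then x(i-k) else 0)"

lemma cf_step:
  assumes "k \<ge> 1"
  shows "cf k (Suc i) j * x j = cf k i j * x j + ((if j = i+k+1 then x j else 0) - (if j = i+1 then x j else 0)
     - (if j = i then x j else 0) + (if k \<le> i \<and> j = i - k then x j else 0))"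
  using assms unfolding cf_def by auto

lemma rw_Suc:
  assumes "k \<ge> 1" "Suc i < n"
  shows "rw n k x (Suc i) = rw n k x i + Dd n k x i"
proof -
  have "rw n k x (Suc i) = (\<Sum>j<n. cf k i j * x j + ((if j = i+k+1 then x j else 0) - (if j = i+1 then x j else 0)
     - (if j = i then x j else 0) + (if k \<le> i \<and> j = i - k then x j else 0)))"
    unfolding rw_def using cf_step[OF assms(1)] by presburger
  also have "\<dots> = rw n k x i + ((\<Sum>j<n. (if j = i+k+1 then x j else 0)) - (\<Sum>j<n. (if j = i+1 then x j else 0))
     - (\<Sum>j<n. (if j = i then x j else 0)) + (\<Sum>j<n. (if k \<le> i \<and> j = i - k then x j else 0)))"
    unfolding rw_def by (simp add: sum.distrib sum_subtractf)
  also have "\<dots> = rw n k x i + Dd n k x i"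
    using assms unfolding Dd_def by (auto simp: sum.delta' )
  finally show ?thesis .
qed

lemma rw_0:
  assumes "k < n"
  shows "rw n k x 0 = (\<Sum>j\<in>{1..k}. x j)"
proof -
  have "rw n k x 0 = (\<Sum>j<n. if j \<in> {1..k} then x j else 0)"
    unfolding rw_def cf_def by (intro sum.cong) auto
  also have "\<dots> = (\<Sum>j\<in>{..<n} \<inter> {1..k}. x j)" by (simp add: sum.inter_restrict)
  also have "{..<n} \<inter> {1..k} = {1..k}" using assms by auto
  finally show ?thesis .
qed

lemma rw_all:
  assumes "k \<ge> 1"
  shows "(\<forall>i<n. rw n k x i = 0) \<longleftrightarrow> (0 < n \<longrightarrow> rw n k x 0 = 0) \<and> (\<forall>i. Suc i < n \<longrightarrow> Dd n k x i = 0)"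
proof
  assume H: "\<forall>i<n. rw n k x i = 0"
  show "(0 < n \<longrightarrow> rw n k x 0 = 0) \<and> (\<forall>i. Suc i < n \<longrightarrow> Dd n k x i = 0)"
    using H rw_Suc[OF assms] by (metis Suc_lessD add_0)
next
  assume H: "(0 < n \<longrightarrow> rw n k x 0 = 0) \<and> (\<forall>i. Suc i < n \<longrightarrow> Dd n k x i = 0)"
  show "\<forall>i<n. rw n k x i = 0"
  proof (intro allI impI)
    fix i assume "i < n" thus "rw n k x i = 0"
      by (induction i) (use H rw_Suc[OF assms] in auto)
  qed
qed

lemma mult_A:
  assumes "v \<in> carrier_vec n" "i < n"
  shows "(A_mat n k *\<^sub>v v) $ i = rw n k (\<lambda>j. v $ j) i"
  using assms by (simp add: A_mat_def mult_mat_vec_def scalar_prod_def cf_def rw_def lessThan_atLeast0)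

definition pp :: "real \<Rightarrow> real \<Rightarrow> nat \<Rightarrow> real" where
  "pp b c j = (if j mod 3 = 1 then b else if j mod 3 = 2 then c else -b-c)"

lemma pp_sum3: "pp b c j + pp b c (Suc j) + pp b c (Suc (Suc j)) = 0"
  unfolding pp_def by (auto simp: mod_Suc)

lemma pp_rec: "j \<ge> 2 \<Longrightarrow> pp b c j = - pp b c (j-2) - pp b c (j-1)"
  using pp_sum3[of b c "j-2"] by (simp add: Suc_diff_Suc numeral_2_eq_2)

lemma pp_1[simp]: "pp b c 1 = b" and pp_2[simp]: "pp b c 2 = c" and pp_0[simp]: "pp b c 0 = -b-c"
  and pp_Suc0[simp]: "pp b c (Suc 0) = b" and pp_zero[simp]: "pp 0 0 j = 0"
  unfolding pp_def by auto

lemma pp_shift: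
  assumes "3 dvd k \<or> (b = 0 \<and> c = 0)"
  shows "pp b c (j + k) = pp b c j"
proof (cases "3 dvd k")
  case True
  then obtain q where "k = 3*q" by auto
  then have "(j+k) mod 3 = j mod 3" by simp
  then show ?thesis unfolding pp_def by simp
next
  case False
  then show ?thesis using assms by simp
qed

lemma pp_sum: "(\<Sum>j\<in>{1..m}. pp b c j) = (if m mod 3 = 0 then 0 else if m mod 3 = 1 then b else b+c)"
proof (induction m)
  case 0 then show ?case by simp
next
  case (Suc m)
  have e: "(\<Sum>j\<in>{1..Suc m}. pp b c j) = (\<Sum>j\<in>{1..m}. pp b c j) + pp b c (Suc m)"
    by simp
  consider "m mod 3 = 0" | "m mod 3 = 1" | "m mod 3 = 2" by linarith
  then show ?case
  proof cases
    case 1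
    then have "Suc m mod 3 = 1" by (simp add: mod_Suc)
    then have "pp b c (Suc m) = b" by (simp add: pp_def)
    then show ?thesis using e Suc.IH 1 \<open>Suc m mod 3 = 1\<close> by simp
  next
    case 2
    then have "Suc m mod 3 = 2" by (simp add: mod_Suc)
    then have "pp b c (Suc m) = c" by (simp add: pp_def)
    then show ?thesis using e Suc.IH 2 \<open>Suc m mod 3 = 2\<close> by simp
  next
    case 3
    then have "Suc m mod 3 = 0" by (simp add: mod_Suc)
    then have "pp b c (Suc m) = -b-c" by (simp add: pp_def)
    then show ?thesis using e Suc.IH 3 \<open>Suc m mod 3 = 0\<close> by simp
  qed
qed

lemma pp_lin: "pp b c j = b * pp 1 0 j + c * pp 0 1 j"
  unfolding pp_def by auto

definition sf :: "nat \<Rightarrow> real \<Rightarrow> real \<Rightarrow> real \<Rightarrow> nat \<Rightarrow> real" where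
  "sf k a b c j = (if j = 0 then a else if j \<le> k then pp b c j else if j = k+1 then a+b
     else if j \<le> 2*k+1 then - pp b c (j+1) else a+b+c)"

lemma sf_lin: "sf k a b c j = a * sf k 1 0 0 j + b * sf k 0 1 0 j + c * sf k 0 0 1 j"
  unfolding sf_def using pp_lin[of b c] pp_lin[of b c "Suc j"] by (auto simp: algebra_simps)

lemma sf_sum:
  assumes "3 dvd k \<or> (b = 0 \<and> c = 0)"
  shows "(\<Sum>j\<in>{1..k}. sf k a b c j) = 0"
proof -
  have "(\<Sum>j\<in>{1..k}. sf k a b c j) = (\<Sum>j\<in>{1..k}. pp b c j)"
    by (intro sum.cong) (auto simp: sf_def)
  also have "\<dots> = 0" using assms pp_sum[of b c k] by (auto simp: dvd_eq_mod_eq_0)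
  finally show ?thesis .
qed

lemma sf_Dd:
  assumes k: "k \<ge> 1" and h: "3 dvd k \<or> (b = 0 \<and> c = 0)" and i: "Suc i < 2*k+3"
  shows "Dd (2*k+3) k (sf k a b c) i = 0"
proof -
  have sh: "\<And>j. pp b c (j + k) = pp b c j" using pp_shift[OF h] .
  have s0: "sf k a b c 0 = a" by (simp add: sf_def)
  have s1: "\<And>j. 1 \<le> j \<Longrightarrow> j \<le> k \<Longrightarrow> sf k a b c j = pp b c j" by (simp add: sf_def)
  have s2: "sf k a b c (k+1) = a + b" by (simp add: sf_def)
  have s3: "\<And>j. k+2 \<le> j \<Longrightarrow> j \<le> 2*k+1 \<Longrightarrow> sf k a b c j = - pp b c (j+1)" by (simp add: sf_def)
  have s4: "sf k a b c (2*k+2) = a+b+c" by (simp add: sf_def)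
  have pc: "pp b c (2*k+1+1) = c"
  proof -
    have "pp b c (2*k+1+1) = pp b c ((2+k)+k)" by (rule arg_cong[where f="pp b c"]) simp
    also have "\<dots> = pp b c (2+k)" by (rule sh)
    also have "\<dots> = c" using sh[of 2] by (simp add: add.commute)
    finally show ?thesis .
  qed
  have p3: "\<And>j. pp b c j + pp b c (j+1) + pp b c (j+2) = 0" using pp_sum3 by simp
  consider "i = 0" | "1 \<le> i" "i < k" | "i = k" | "i = k+1" | "k+2 \<le> i" "i \<le> 2*k" | "i = 2*k+1"
    using i k by linarith
  then show ?thesis
  proof cases
    case 1 then show ?thesis using k s0 s1[of 1] s2 by (simp add: Dd_def)
  next
    case 2
    have "pp b c (i+k+1+1) = pp b c (i+2)" using sh[of "i+2"] by (simp add: algebra_simps)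
    moreover have "Dd (2*k+3) k (sf k a b c) i = sf k a b c (i+k+1) - sf k a b c (i+1) - sf k a b c i"
      using 2 k by (simp add: Dd_def)
    ultimately show ?thesis using 2 k p3[of i] s1[of i] s1[of "i+1"] s3[of "i+k+1"] by simp
  next
    case 3
    have eqkk: "k + k + 1 = 2*k+1" by simp
    note pc
    moreover have "pp b c k = -b-c" using sh[of 0] by simp
    moreover have "Dd (2*k+3) k (sf k a b c) i = sf k a b c (2*k+1) - sf k a b c (k+1) - sf k a b c k + sf k a b c 0"
      using 3 by (simp add: Dd_def) (metis mult_2)
    ultimately show ?thesis using 3 k s0 s1[of k] s2 s3[of "2*k+1"] by simp
  next
    case 4
    have "pp b c (k+2+1) = pp b c (3+k)" by (rule arg_cong[where f="pp b c"]) simp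
    also have "\<dots> = pp b c 3" by (rule sh)
    also have "\<dots> = -b-c" by (simp add: pp_def)
    finally have "pp b c (k+2+1) = -b-c" .
    moreover have "Dd (2*k+3) k (sf k a b c) i = sf k a b c (2*k+2) - sf k a b c (k+2) - sf k a b c (k+1) + sf k a b c 1"
      using 4 by (simp add: Dd_def) (metis mult_2)
    ultimately show ?thesis using 4 k s1[of 1] s2 s3[of "k+2"] s4 by simp
  next
    case 5
    have e1: "pp b c (i+1+1) = pp b c (i-k+2)" using sh[of "i-k+2"] 5 by (simp add: algebra_simps)
    have e2: "pp b c (i+1) = pp b c (i-k+1)" using sh[of "i-k+1"] 5 by (simp add: algebra_simps)
    have "Dd (2*k+3) k (sf k a b c) i = - sf k a b c (i+1) - sf k a b c i + sf k a b c (i-k)"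
      using 5 by (simp add: Dd_def)
    then show ?thesis using 5 k e1 e2 p3[of "i-k"] s1[of "i-k"] s3[of i] s3[of "i+1"] by simp
  next
    case 6
    note pc
    moreover have "Dd (2*k+3) k (sf k a b c) i = - sf k a b c (2*k+2) - sf k a b c (2*k+1) + sf k a b c (k+1)"
      using 6 k by (simp add: Dd_def)
    ultimately show ?thesis using 6 k s2 s3[of "2*k+1"] s4 by simp
  qed
qed

context
  fixes k :: nat and x :: "nat \<Rightarrow> real"
  assumes k1: "k \<ge> 1"
    and HD: "\<forall>i. Suc i < 2*k+3 \<longrightarrow> Dd (2*k+3) k x i = 0"
begin

lemma L1: "i < k \<Longrightarrow> x (i+k+1) = x i + x (i+1)"
  using HD[rule_format, of i] by (simp add: Dd_def)

lemma L2: "k+2 \<le> i \<Longrightarrow> i \<le> 2*k+1 \<Longrightarrow> x (i+1) + x i = x (i-k)"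
  using HD[rule_format, of i] by (simp add: Dd_def)

lemma L3: "x (2*k+1) = x (k+1) + x k - x 0"
proof -
  have "Dd (2*k+3) k x k = 0" using HD by simp
  moreover have "Dd (2*k+3) k x k = x (k+k+1) - x (k+1) - x k + x 0" by (simp add: Dd_def)
  moreover have "x (2*k+1) = x (k+k+1)" by (rule arg_cong[where f=x]) simp
  ultimately show ?thesis by linarith
qed

lemma L4: "x (2*k+2) = x (k+2) + x (k+1) - x 1"
proof -
  have "Dd (2*k+3) k x (k+1) = 0" using HD by simp
  moreover have "Dd (2*k+3) k x (k+1) = x (k+1+k+1) - x (k+2) - x (k+1) + x 1" by (simp add: Dd_def)
  moreover have "x (2*k+2) = x (k+1+k+1)" by (rule arg_cong[where f=x]) simp
  ultimately show ?thesis by linarith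
qed

lemma Rec: "2 \<le> m \<Longrightarrow> m < k \<Longrightarrow> x (m+1) = - x (m-1) - x m"
proof -
  assume m: "2 \<le> m" "m < k"
  obtain q where q: "m = Suc q" using m by (cases m) auto
  have a: "x (Suc (Suc (k+q))) + x (Suc (k+q)) = x (Suc q)" using L2[of "Suc (k+q)"] m q by simp
  have b: "x (Suc (Suc (k+q))) = x (Suc q) + x (Suc (Suc q))" using L1[of "Suc q"] m q by (simp add: add.commute)
  have c: "x (Suc (k+q)) = x q + x (Suc q)" using L1[of q] m q by (simp add: add.commute)
  show ?thesis using a b c q by simp
qed

lemma Pform: "k \<ge> 2 \<Longrightarrow> 1 \<le> j \<Longrightarrow> j \<le> k \<Longrightarrow> x j = pp (x 1) (x 2) j"
proof (induction j rule: less_induct)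
  case (less j)
  consider "j = 1" | "j = 2" | "j \<ge> 3" using less.prems by linarith
  then show ?case
  proof cases
    case 1 then show ?thesis by simp
  next
    case 2 then show ?thesis by simp
  next
    case 3
    have r: "x j = - x (j-2) - x (j-1)" using Rec[of "j-1"] 3 less.prems
      by (simp add: numeral_2_eq_2 Suc_diff_Suc)
    have i1: "x (j-2) = pp (x 1) (x 2) (j-2)" using less.IH[of "j-2"] 3 less.prems by simp
    have i2: "x (j-1) = pp (x 1) (x 2) (j-1)" using less.IH[of "j-1"] 3 less.prems by simp
    show ?thesis using r i1 i2 pp_rec[of j "x 1" "x 2"] 3 by simp
  qed
qed

lemma Main:
  assumes k2: "k \<ge> 2" and h: "3 dvd k \<or> (x 1 = 0 \<and> x 2 = 0)" and j: "j < 2*k+3"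
  shows "x j = sf k (x 0) (x 1) (x 2) j"
proof -
  let ?p = "pp (x 1) (x 2)"
  have sh: "\<And>j. ?p (j + k) = ?p j" using pp_shift[OF h] .
  consider "j = 0" | "1 \<le> j" "j \<le> k" | "j = k+1" | "k+2 \<le> j" "j \<le> 2*k" | "j = 2*k+1" | "j = 2*k+2"
    using j by linarith
  then show ?thesis
  proof cases
    case 1 then show ?thesis by (simp add: sf_def)
  next
    case 2 then show ?thesis using Pform[OF k2, of j] by (simp add: sf_def)
  next
    case 3 then show ?thesis using L1[of 0] k1 by (simp add: sf_def)
  next
    case 4
    define i where "i = j - k - 1"
    have ij: "j = i+k+1" "1 \<le> i" "i < k" using 4 unfolding i_def by auto
    have "x j = x i + x (i+1)" using L1[of i] ij by simp
    also have "\<dots> = ?p i + ?p (i+1)" using Pform[OF k2, of i] Pform[OF k2, of "i+1"] ij by simp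
    also have "\<dots> = - ?p (i+2)" using pp_sum3[of "x 1" "x 2" i] by simp
    also have "?p (i+2) = ?p (j+1)" using sh[of "i+2"] ij by (simp add: algebra_simps)
    finally show ?thesis using 4 by (simp add: sf_def)
  next
    case 5
    have "x j = x (k+1) + x k - x 0" using L3 5 by simp
    also have "\<dots> = x 1 + ?p k" using L1[of 0] k1 Pform[OF k2, of k] k2 by simp
    also have "?p k = - x 1 - x 2" using sh[of 0] by simp
    finally have xj: "x j = - x 2" by simp
    have "?p (j+1) = ?p ((2+k)+k)" using 5 by (intro arg_cong[where f="?p"]) simp
    also have "\<dots> = ?p 2" using sh[of "2+k"] sh[of 2] by (simp add: add.commute)
    finally have "?p (j+1) = x 2" by simp
    then show ?thesis using xj 5 k1 by (simp add: sf_def)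
  next
    case 6
    have "x j = x (k+2) + x (k+1) - x 1" using L4 6 by simp
    also have "\<dots> = x 0 + x 1 + x 2" using L1[of 0] L1[of 1] k1 k2 by (simp add: numeral_2_eq_2)
    finally show ?thesis using 6 by (simp add: sf_def)
  qed
qed

lemma NonDvd:
  assumes k2: "k \<ge> 2" and nd: "\<not> 3 dvd k"
  shows "x 1 = 0 \<and> x 2 = 0"
proof -
  let ?p = "pp (x 1) (x 2)"
  have A0: "x (2*k+1) + x (2*k) = x k" using L2[of "2*k"] k2 by simp
  have B0: "x (2*k+2) + x (2*k+1) = x (k+1)" using L2[of "2*k+1"] k2 by simp
  have e1a: "x (2*k) = x (k-1+k+1)" by (rule arg_cong[where f=x]) (use k2 in simp)
  have e1b: "x (k-1+1) = x k" using k2 by simp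
  have e1: "x (2*k) = x (k-1) + x k" using L1[of "k-1"] k2 e1a e1b by linarith
  have e2: "x (k+1) = x 0 + x 1" using L1[of 0] k1 by simp
  have e3: "x (k+2) = x 1 + x 2" using L1[of 1] k2 by (simp add: numeral_2_eq_2)
  have A: "x 1 + x (k-1) + x k = 0" using A0 e1 e2 L3 by linarith
  have B: "x 1 + x 2 + x k = 0" using B0 e2 e3 L3 L4 by linarith
  have pk1: "x k = ?p k" using Pform[OF k2, of k] k2 by simp
  have pk2: "x (k-1) = ?p (k-1)" using Pform[OF k2, of "k-1"] k2 by simp
  note pk = pk1 pk2
  have kd: "k = 3 * (k div 3) + k mod 3" by simp
  have "k mod 3 \<noteq> 0" using nd by (simp add: dvd_eq_mod_eq_0)
  moreover have "k mod 3 < 3" by simp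
  ultimately have "k mod 3 = 1 \<or> k mod 3 = 2" by linarith
  then show ?thesis
  proof
    assume m: "k mod 3 = 1"
    then have "k - 1 = 3 * (k div 3)" using kd by linarith
    then have "(k-1) mod 3 = 0" by simp
    then have "?p k = x 1" "?p (k-1) = - x 1 - x 2" using m unfolding pp_def by simp_all
    then show ?thesis using A B pk by linarith
  next
    assume m: "k mod 3 = 2"
    then have "k - 1 = 3 * (k div 3) + 1" using kd by linarith
    then have "(k-1) mod 3 = 1" by simp
    then have "?p k = x 2" "?p (k-1) = x 1" using m unfolding pp_def by simp_all
    then show ?thesis using A B pk by linarith
  qed
qed

end

lemma k1_case:
  fixes x :: "nat \<Rightarrow> real"
  assumes HD: "\<forall>i. Suc i < 2*1+3 \<longrightarrow> Dd (2*1+3) 1 x i = 0"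
  shows "\<forall>j < 2*1+3. x j = sf 1 (x 0) 0 0 j"
proof -
  have e0: "x 2 - x 1 - x 0 = 0" using HD[rule_format, of 0] by (simp add: Dd_def eval_nat_numeral)
  have e1: "x 3 - x 2 - x 1 + x 0 = 0" using HD[rule_format, of 1] by (simp add: Dd_def eval_nat_numeral)
  have e2: "x 4 - x 3 - x 2 + x 1 = 0" using HD[rule_format, of 2] by (simp add: Dd_def eval_nat_numeral)
  have e3: "- x 4 - x 3 + x 2 = 0" using HD[rule_format, of 3] by (simp add: Dd_def eval_nat_numeral)
  have z: "x 1 = 0" "x 2 = x 0" "x 3 = 0" "x 4 = x 0" using e0 e1 e2 e3 by linarith+
  show ?thesis
  proof (intro allI impI)
    fix j :: nat assume "j < 2*1+3"
    then have "j = 0 \<or> j = 1 \<or> j = 2 \<or> j = 3 \<or> j = 4" by linarith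
    then show "x j = sf 1 (x 0) 0 0 j"
    proof (elim disjE)
      assume "j = 0" then show ?thesis by (simp add: sf_def)
    next
      assume "j = 1" then show ?thesis using z by (simp add: sf_def)
    next
      assume "j = 2" then show ?thesis using z by (simp add: sf_def)
    next
      assume "j = 3" then show ?thesis using z by (simp add: sf_def)
    next
      assume "j = 4" then show ?thesis using z by (simp add: sf_def)
    qed
  qed
qed

lemma derive_dvd:
  fixes x :: "nat \<Rightarrow> real"
  assumes k1: "k \<ge> 1" and HD: "\<forall>i. Suc i < 2*k+3 \<longrightarrow> Dd (2*k+3) k x i = 0" and d: "3 dvd k"
  shows "\<forall>j < 2*k+3. x j = sf k (x 0) (x 1) (x 2) j"
proof -
  have "k \<noteq> 1"
  proof
    assume "k = 1" with d show False by simp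
  qed
  then have k2: "k \<ge> 2" using k1 by linarith
  show ?thesis
  proof (intro allI impI)
    fix j assume "j < 2*k+3"
    then show "x j = sf k (x 0) (x 1) (x 2) j" using Main[OF k1 HD k2, of j] d by simp
  qed
qed

lemma derive_nd:
  fixes x :: "nat \<Rightarrow> real"
  assumes k1: "k \<ge> 1" and HD: "\<forall>i. Suc i < 2*k+3 \<longrightarrow> Dd (2*k+3) k x i = 0" and d: "\<not> 3 dvd k"
  shows "\<forall>j < 2*k+3. x j = sf k (x 0) 0 0 j"
proof (cases "k = 1")
  case True
  have HD1: "\<forall>i. Suc i < 2*1+3 \<longrightarrow> Dd (2*1+3) 1 x i = 0" using HD unfolding True .
  show ?thesis using k1_case[OF HD1] unfolding True .
next
  case False
  then have k2: "k \<ge> 2" using k1 by simp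
  have h: "x 1 = 0 \<and> x 2 = 0" using NonDvd[OF k1 HD k2 d] .
  show ?thesis
  proof (intro allI impI)
    fix j assume "j < 2*k+3"
    then show "x j = sf k (x 0) 0 0 j" using Main[OF k1 HD k2, of j] h by simp
  qed
qed

lemma A_carrier: "A_mat n k \<in> carrier_mat n n" by (simp add: A_mat_def)

lemma ker_iff:
  assumes k1: "k \<ge> 1" and v: "v \<in> carrier_vec (2*k+3)"
  shows "v \<in> mat_kernel (A_mat (2*k+3) k) \<longleftrightarrow>
    (\<Sum>j\<in>{1..k}. v $ j) = 0 \<and> (\<forall>i. Suc i < 2*k+3 \<longrightarrow> Dd (2*k+3) k (\<lambda>j. v $ j) i = 0)"
proof -
  let ?n = "2*k+3"
  let ?A = "A_mat ?n k"
  have "v \<in> mat_kernel ?A \<longleftrightarrow> ?A *\<^sub>v v = 0\<^sub>v ?n" using mat_kernel[OF A_carrier] v by simp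
  also have "\<dots> \<longleftrightarrow> (\<forall>i<?n. rw ?n k (\<lambda>j. v $ j) i = 0)"
  proof -
    have d: "dim_vec (?A *\<^sub>v v) = ?n" using A_carrier[of ?n k] by simp
    show ?thesis unfolding vec_eq_iff using d mult_A[OF v] by (auto simp del: index_mult_mat_vec)
  qed
  also have "\<dots> \<longleftrightarrow> rw ?n k (\<lambda>j. v $ j) 0 = 0 \<and> (\<forall>i. Suc i < ?n \<longrightarrow> Dd ?n k (\<lambda>j. v $ j) i = 0)"
    using rw_all[OF k1, of ?n "\<lambda>j. v $ j"] by simp
  also have "rw ?n k (\<lambda>j. v $ j) 0 = (\<Sum>j\<in>{1..k}. v $ j)" by (rule rw_0) simp
  finally show ?thesis .
qed

lemma Dd_vec:
  assumes "Suc i < n"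
  shows "Dd n k (\<lambda>j. vec n f $ j) i = Dd n k f i"
  using assms unfolding Dd_def by auto

lemma sfv_ker:
  assumes k1: "k \<ge> 1" and h: "3 dvd k \<or> (b = 0 \<and> c = 0)"
  shows "vec (2*k+3) (sf k a b c) \<in> mat_kernel (A_mat (2*k+3) k)"
proof -
  have s: "(\<Sum>j\<in>{1..k}. vec (2*k+3) (sf k a b c) $ j) = (\<Sum>j\<in>{1..k}. sf k a b c j)"
    by (intro sum.cong) auto
  show ?thesis
    unfolding ker_iff[OF k1 vec_carrier] s
    using sf_sum[OF h] sf_Dd[OF k1 h] Dd_vec by simp
qed

theorem theorem8p3:
  fixes k :: nat
  assumes "k \<ge> 1"
  shows "N (2 * k + 3) k = (if 3 dvd k then 3 else 1)"
proof -
  note k1 = assms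
  interpret K: kernel "2*k+3" "2*k+3" "A_mat (2*k+3) k" by unfold_locales (rule A_carrier)
  have Nk: "N (2*k+3) k = K.dim" unfolding N_def by (rule K.kernel_dim)
  let ?K = "mat_kernel (A_mat (2*k+3) k)"
  define w where "w = vec (2*k+3) (sf k 1 0 0)"
  have w_ker: "w \<in> ?K" unfolding w_def by (rule sfv_ker[OF k1]) simp
  have wj: "w $ j = sf k 1 0 0 j" if "j < 2*k+3" for j unfolding w_def using that by simp
  have kerD: "v \<in> carrier_vec (2*k+3) \<and> (\<forall>i. Suc i < 2*k+3 \<longrightarrow> Dd (2*k+3) k (\<lambda>j. v $ j) i = 0)"
    if "v \<in> ?K" for v
  proof -
    have vc: "v \<in> carrier_vec (2*k+3)" using that mat_kernelD[OF A_carrier] by blast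
    then show ?thesis using that ker_iff[OF k1 vc] by blast
  qed
  have lc_carrier: "K.lincomb a B \<in> carrier_vec (2*k+3)" if "B \<subseteq> ?K" for a B
  proof -
    have "K.lincomb a B \<in> ?K" using K.Ker.lincomb_closed[OF that] by simp
    then show ?thesis using mat_kernelD[OF A_carrier] by blast
  qed
  show ?thesis
  proof (cases "3 dvd k")
    case True
    have k3: "k \<ge> 3" using True k1 by (auto elim!: dvdE)
    define u1 where "u1 = vec (2*k+3) (sf k 0 1 0)"
    define u2 where "u2 = vec (2*k+3) (sf k 0 0 1)"
    have u1j: "u1 $ j = sf k 0 1 0 j" if "j < 2*k+3" for j unfolding u1_def using that by simp
    have u2j: "u2 $ j = sf k 0 0 1 j" if "j < 2*k+3" for j unfolding u2_def using that by simp
    let ?B = "{w, u1, u2}"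
    have w0: "w $ 0 = 1" "w $ 1 = 0" "w $ 2 = 0" using k3 wj[of 0] wj[of 1] wj[of 2] by (simp_all add: sf_def)
    have u10: "u1 $ 0 = 0" "u1 $ 1 = 1" "u1 $ 2 = 0" using k3 u1j[of 0] u1j[of 1] u1j[of 2] by (simp_all add: sf_def pp_def)
    have u20: "u2 $ 0 = 0" "u2 $ 1 = 0" "u2 $ 2 = 1" using k3 u2j[of 0] u2j[of 1] u2j[of 2] by (simp_all add: sf_def pp_def)
    have ne: "w \<noteq> u1" "w \<noteq> u2" "u1 \<noteq> u2"
      using w0 u10 u20 by (metis zero_neq_one)+
    have "u1 \<in> ?K" unfolding u1_def using sfv_ker[OF k1] True by simp
    moreover have "u2 \<in> ?K" unfolding u2_def using sfv_ker[OF k1] True by simp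
    ultimately have sub: "?B \<subseteq> ?K" using w_ker by simp
    have cardB: "card ?B = 3" using ne by simp
    have lci: "K.lincomb a ?B $ j = a w * w $ j + a u1 * u1 $ j + a u2 * u2 $ j"
      if "j < 2*k+3" for a j
    proof -
      have s3: "(\<Sum>x\<in>?B. a x * x $ j) = a w * w $ j + a u1 * u1 $ j + a u2 * u2 $ j"
        using ne by (simp add: algebra_simps)
      show ?thesis using K.lincomb_index[OF that sub, of a] s3 by (rule trans)
    qed
    have span: "K.span ?B = ?K"
    proof
      show "K.span ?B \<subseteq> ?K" using K.Ker.span_is_subset2[OF sub] by simp
      show "?K \<subseteq> K.span ?B"
      proof
        fix v assume v: "v \<in> ?K"
        note kv = kerD[OF v]
        have vc: "v \<in> carrier_vec (2*k+3)" using kv by (rule conjunct1)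
        have HD: "\<forall>i. Suc i < 2*k+3 \<longrightarrow> Dd (2*k+3) k (\<lambda>j. v $ j) i = 0" using kv by (rule conjunct2)
        have vs: "\<forall>j<2*k+3. v $ j = sf k (v $ 0) (v $ 1) (v $ 2) j"
          using derive_dvd[OF k1 HD True] .
        define a where "a = (\<lambda>u. if u = w then v $ 0 else if u = u1 then v $ 1 else v $ 2)"
        define l where "l = K.lincomb a ?B"
        have lc: "l \<in> carrier_vec (2*k+3)" unfolding l_def by (rule lc_carrier[OF sub])
        have ll: "l $ j = a w * w $ j + a u1 * u1 $ j + a u2 * u2 $ j" if "j < 2*k+3" for j
          unfolding l_def by (rule lci[OF that, of a])
        have "v = l"
        proof (rule eq_vecI)
          show "dim_vec v = dim_vec l" using carrier_vecD[OF vc] carrier_vecD[OF lc] by (rule trans[OF _ sym])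
          fix j assume "j < dim_vec l"
          then have j: "j < 2*k+3" using carrier_vecD[OF lc] by simp
          have "l $ j = v $ 0 * sf k 1 0 0 j + v $ 1 * sf k 0 1 0 j + v $ 2 * sf k 0 0 1 j"
            unfolding ll[OF j] a_def using ne j wj u1j u2j by simp
          also have "\<dots> = sf k (v $ 0) (v $ 1) (v $ 2) j" by (rule sf_lin[symmetric])
          also have "\<dots> = v $ j" using vs[rule_format, OF j] by (rule sym)
          finally show "v $ j = l $ j" by simp
        qed
        then have "v = K.lincomb a ?B" unfolding l_def .
        then show "v \<in> K.span ?B" unfolding K.Ker.span_def by blast
      qed
    qed
    have indep: "K.lin_indpt ?B"
    proof (rule K.Ker.finite_lin_indpt2)
      show "finite ?B" by simp
      show "?B \<subseteq> ?K" by (rule sub)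
      fix a assume "K.lincomb a ?B = 0\<^sub>v (2*k+3)"
      then have z: "K.lincomb a ?B $ j = 0" if "j < 2*k+3" for j using that by simp
      have "a w = 0" using z[of 0] lci[of 0 a] w0 u10 u20 by simp
      moreover have "a u1 = 0" using z[of 1] lci[of 1 a] w0 u10 u20 by simp
      moreover have "a u2 = 0" using z[of 2] lci[of 2 a] w0 u10 u20 by simp
      ultimately show "\<forall>v\<in>?B. a v = 0" by simp
    qed
    have "K.basis ?B" unfolding K.Ker.basis_def using indep span sub by simp
    then have "K.dim = 3" using K.Ker.dim_basis[of ?B] cardB by simp
    then show ?thesis using Nk True by simp
  next
    case False
    let ?B = "{w}"
    have w0: "w $ 0 = 1" using wj[of 0] by (simp add: sf_def)
    have sub: "?B \<subseteq> ?K" using w_ker by auto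
    have lci: "K.lincomb a ?B $ j = a w * w $ j" if "j < 2*k+3" for a j
    proof -
      have s1: "(\<Sum>x\<in>?B. a x * x $ j) = a w * w $ j" by simp
      show ?thesis using K.lincomb_index[OF that sub, of a] s1 by (rule trans)
    qed
    have span: "K.span ?B = ?K"
    proof
      show "K.span ?B \<subseteq> ?K" using K.Ker.span_is_subset2[OF sub] by simp
      show "?K \<subseteq> K.span ?B"
      proof
        fix v assume v: "v \<in> ?K"
        note kv = kerD[OF v]
        have vc: "v \<in> carrier_vec (2*k+3)" using kv by (rule conjunct1)
        have HD: "\<forall>i. Suc i < 2*k+3 \<longrightarrow> Dd (2*k+3) k (\<lambda>j. v $ j) i = 0" using kv by (rule conjunct2)
        have vs: "\<forall>j<2*k+3. v $ j = sf k (v $ 0) 0 0 j"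
          using derive_nd[OF k1 HD False] .
        define a where "a = (\<lambda>u::real vec. v $ 0)"
        define l where "l = K.lincomb a ?B"
        have lc: "l \<in> carrier_vec (2*k+3)" unfolding l_def by (rule lc_carrier[OF sub])
        have ll: "l $ j = a w * w $ j" if "j < 2*k+3" for j
          unfolding l_def by (rule lci[OF that, of a])
        have "v = l"
        proof (rule eq_vecI)
          show "dim_vec v = dim_vec l" using carrier_vecD[OF vc] carrier_vecD[OF lc] by (rule trans[OF _ sym])
          fix j assume "j < dim_vec l"
          then have j: "j < 2*k+3" using carrier_vecD[OF lc] by simp
          have "l $ j = v $ 0 * sf k 1 0 0 j"
            unfolding ll[OF j] a_def using j wj by simp
          also have "\<dots> = sf k (v $ 0) 0 0 j" using sf_lin[of k "v $ 0" 0 0 j] by simp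
          also have "\<dots> = v $ j" using vs[rule_format, OF j] by (rule sym)
          finally show "v $ j = l $ j" by simp
        qed
        then have "v = K.lincomb a ?B" unfolding l_def .
        then show "v \<in> K.span ?B" unfolding K.Ker.span_def by blast
      qed
    qed
    have indep: "K.lin_indpt ?B"
    proof (rule K.Ker.finite_lin_indpt2)
      show "finite ?B" by simp
      show "?B \<subseteq> ?K" by (rule sub)
      fix a assume "K.lincomb a ?B = 0\<^sub>v (2*k+3)"
      then have "K.lincomb a ?B $ 0 = 0" by simp
      then have "a w = 0" using lci[of 0 a] w0 by simp
      then show "\<forall>v\<in>?B. a v = 0" by simp
    qed
    have "K.basis ?B" unfolding K.Ker.basis_def using indep span sub by simp
    then have "K.dim = 1" using K.Ker.dim_basis[of ?B] by simp
    then show ?thesis using Nk False by simp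
  qed
qed


end
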